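(* Let $\mathcal{F}:\mathcal{T}^Y\to\mathcal{T}^Z$ be a cover between trees of spheres, let $T''$ be a nonempty, open and connected subset of $T^Z$, and let $T'$ be a connected component of $F^{-1}(T'')$. Then the map $\overline{\mathcal{F}}:\overline{T'}\to\overline{T''}$ defined by $\overline{F}:=F|_{\overline{T'}}:\overline{T'}\to\overline{T''}$ and $\overline{f}_v:=f_v$ for every internal vertex $v$ of $\overline{T'}$ is a cover between trees of spheres, where $\overline{T'}$ (resp. $\overline{T''}$) is regarded as a tree of spheres marked by its set of leaves, with the spheres $\mathcal{S}_v$ and attaching maps $i_v$ of $\mathcal{T}^Y$ (resp. $\mathcal{T}^Z$) at its internal vertices.
   Context: Trees are finite connected graphs without cycles (vertex set $V$, edges $2$-element subsets of $V$, $E_v$ the set of edges containing $v$), regarded as the set $V\sqcup E$ with the topology whose closed sets are the sub-graphs (subsets containing both endpoints of each of their edges); $\overline{A}$ denotes closure. Leaves are vertices of valence $1$, the others internal vertices ($IV$). For $T''$ and $T'$ as in the claim, $\overline{T'}$ is a sub-tree of $T^Y$ whose internal vertices are exactly the internal vertices of $T^Y$ lying in $T'$, each having the same set of incident edges as in $T^Y$ (similarly for $\overline{T''}$ in $T^Z$), so the attaching maps $i_v$ make sense. A tree of spheres $\mathcal{T}^X$ marked by a finite set $X$ ($\ge3$ elements) consists of a tree $T^X$ whose leaf set is $X$ and, for each internal vertex $v$, a topological $2$-sphere $\mathcal{S}_v$ and an injection $i_v:E_v\to\mathcal{S}_v$; $X_v:=i_v(E_v)$. A cover $\mathcal{F}:\mathcal{T}^Y\to\mathcal{T}^Z$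 consists of a map $F:T^Y\to T^Z$ sending vertices to vertices and each edge $\{v,w\}$ to the edge $\{F(v),F(w)\}$, with $F(Y)\subseteq Z$, $F(IV^Y)\subseteq IV^Z$ (leaves to leaves, internal vertices to internal vertices), and for each $v\in IV^Y$, $w=F(v)$, a topological branched covering $f_v:\mathcal{S}_v\to\mathcal{S}_w$ such that $f_v:\mathcal{S}_v\setminus Y_v\to\mathcal{S}_w\setminus Z_w$ is a covering map, $f_v\circ i_v=i_w\circ F$ on $E_v$, and for an edge $e=\{v_1,v_2\}$ between internal vertices $\deg_{i_{v_1}(e)}f_{v_1}=\deg_{i_{v_2}(e)}f_{v_2}$. *)

theory Defs
  imports "HOL-Analysis.Analysis"
begin

definition edges_at :: "'v set set \<Rightarrow> 'v \<Rightarrow> 'v set set" where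
  "edges_at E v = {e \<in> E. v \<in> e}"

definition is_graph :: "'v set \<Rightarrow> 'v set set \<Rightarrow> bool" where
  "is_graph V E \<longleftrightarrow> (\<forall>e\<in>E. \<exists>a b. a \<noteq> b \<and> a \<in> V \<and> b \<in> V \<and> e = {a, b})"

definition graph_connected :: "'v set \<Rightarrow> 'v set set \<Rightarrow> bool" where
  "graph_connected V E \<longleftrightarrow>
     (\<forall>a\<in>V. \<forall>b\<in>V. (\<lambda>x y. {x, y} \<in> E)\<^sup>*\<^sup>* a b)"

definition is_cycle :: "'v set set \<Rightarrow> 'v list \<Rightarrow> bool" where
  "is_cycle E vs \<longleftrightarrow> length vs \<ge> 3 \<and> distinct vs \<and>
     (\<forall>k. Suc k < length vs \<longrightarrow> {vs ! k, vs ! Suc k} \<in> E) \<and> {last vs, hd vs} \<in> E"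

definition is_tree :: "'v set \<Rightarrow> 'v set set \<Rightarrow> bool" where
  "is_tree V E \<longleftrightarrow> finite V \<and> V \<noteq> {} \<and> is_graph V E \<and> graph_connected V E \<and>
     \<not> (\<exists>vs. set vs \<subseteq> V \<and> is_cycle E vs)"

definition leaves :: "'v set \<Rightarrow> 'v set set \<Rightarrow> 'v set" where
  "leaves V E = {v \<in> V. card (edges_at E v) = 1}"

definition internal_vertices :: "'v set \<Rightarrow> 'v set set \<Rightarrow> 'v set" where
  "internal_vertices V E = {v \<in> V. card (edges_at E v) \<noteq> 1}"

text \<open>Closed sets are the sub-graphs; equivalently open sets are the sets which contain,
  together with any vertex, every edge incident to it.\<close>

definition tree_points :: "'v set \<Rightarrow> 'v set set \<Rightarrow> ('v + 'v set) set" where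
  "tree_points V E = Inl ` V \<union> Inr ` E"

definition tree_open :: "'v set \<Rightarrow> 'v set set \<Rightarrow> ('v + 'v set) set \<Rightarrow> bool" where
  "tree_open V E U \<longleftrightarrow> U \<subseteq> tree_points V E \<and>
     (\<forall>v e. Inl v \<in> U \<longrightarrow> e \<in> E \<longrightarrow> v \<in> e \<longrightarrow> Inr e \<in> U)"

lemma istopology_tree_open: "istopology (tree_open V E)"
  unfolding istopology_def tree_open_def by blast

definition tree_top :: "'v set \<Rightarrow> 'v set set \<Rightarrow> ('v + 'v set) topology" where
  "tree_top V E = topology (tree_open V E)"

lemma openin_tree_top: "openin (tree_top V E) U \<longleftrightarrow> tree_open V E U"
  unfolding tree_top_def by (simp add: topology_inverse'[OF istopology_tree_open[of V E]])

definition sub_vertices :: "('v + 'v set) set \<Rightarrow> 'v set" where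
  "sub_vertices A = {v. Inl v \<in> A}"

definition sub_edges :: "('v + 'v set) set \<Rightarrow> 'v set set" where
  "sub_edges A = {e. Inr e \<in> A}"

definition tree_map :: "('v \<Rightarrow> 'w) \<Rightarrow> ('v + 'v set) \<Rightarrow> ('w + 'w set)" where
  "tree_map F p = (case p of Inl v \<Rightarrow> Inl (F v) | Inr e \<Rightarrow> Inr (F ` e))"

definition branched_local ::
  "('a::topological_space \<Rightarrow> 'b::topological_space) \<Rightarrow> 'a set \<Rightarrow> 'b set \<Rightarrow> 'a \<Rightarrow> nat \<Rightarrow> bool" where
  "branched_local f S T x d \<longleftrightarrow> d \<ge> 1 \<and>
     (\<exists>U V \<phi> \<phi>' \<psi> \<psi>'. openin (top_of_set S) U \<and> x \<in> U \<and> openin (top_of_set T) V \<and>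
        f ` U \<subseteq> V \<and>
        homeomorphism U (ball (0::complex) 1) \<phi> \<phi>' \<and> \<phi> x = 0 \<and>
        homeomorphism V (ball (0::complex) 1) \<psi> \<psi>' \<and> \<psi> (f x) = 0 \<and>
        (\<forall>u\<in>U. \<psi> (f u) = (\<phi> u) ^ d))"

definition branched_covering ::
  "('a::topological_space \<Rightarrow> 'b::topological_space) \<Rightarrow> 'a set \<Rightarrow> 'b set \<Rightarrow> bool" where
  "branched_covering f S T \<longleftrightarrow> continuous_on S f \<and> f ` S = T \<and>
     (\<forall>x\<in>S. \<exists>d. branched_local f S T x d)"

definition local_deg ::
  "('a::topological_space \<Rightarrow> 'b::topological_space) \<Rightarrow> 'a set \<Rightarrow> 'b set \<Rightarrow> 'a \<Rightarrow> nat" where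
  "local_deg f S T x = (THE d. branched_local f S T x d)"

text \<open>Tree of spheres marked by its leaf set, without the cardinality requirement.
  \<open>S v\<close> is the sphere at v, \<open>i v\<close> the attaching map on \<open>E_v\<close>.\<close>
definition tree_of_spheres_data ::
  "'v set \<Rightarrow> 'v set set \<Rightarrow> ('v \<Rightarrow> 'a::topological_space set) \<Rightarrow> ('v \<Rightarrow> 'v set \<Rightarrow> 'a) \<Rightarrow> bool" where
  "tree_of_spheres_data V E S i \<longleftrightarrow> is_tree V E \<and>
     (\<forall>v\<in>internal_vertices V E.
        S v homeomorphic sphere (0::real^3) 1 \<and>
        inj_on (i v) (edges_at E v) \<and> i v ` edges_at E v \<subseteq> S v)"

definition tree_of_spheres ::
  "'v set \<Rightarrow> 'v set set \<Rightarrow> ('v \<Rightarrow> 'a::topological_space set) \<Rightarrow> ('v \<Rightarrow> 'v set \<Rightarrow> 'a) \<Rightarrow> bool" where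
  "tree_of_spheres V E S i \<longleftrightarrow> tree_of_spheres_data V E S i \<and> card (leaves V E) \<ge> 3"

definition marked_points :: "'v set set \<Rightarrow> ('v \<Rightarrow> 'v set \<Rightarrow> 'a) \<Rightarrow> 'v \<Rightarrow> 'a set" where
  "marked_points E i v = i v ` edges_at E v"

definition tos_cover ::
  "'v set \<Rightarrow> 'v set set \<Rightarrow> ('v \<Rightarrow> 'a::topological_space set) \<Rightarrow> ('v \<Rightarrow> 'v set \<Rightarrow> 'a) \<Rightarrow>
   'w set \<Rightarrow> 'w set set \<Rightarrow> ('w \<Rightarrow> 'b::topological_space set) \<Rightarrow> ('w \<Rightarrow> 'w set \<Rightarrow> 'b) \<Rightarrow>
   ('v \<Rightarrow> 'w) \<Rightarrow> ('v \<Rightarrow> 'a \<Rightarrow> 'b) \<Rightarrow> bool" where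
  "tos_cover VY EY SY iY VZ EZ SZ iZ F f \<longleftrightarrow>
     F ` VY \<subseteq> VZ \<and>
     (\<forall>v w. {v, w} \<in> EY \<longrightarrow> {F v, F w} \<in> EZ) \<and>
     F ` leaves VY EY \<subseteq> leaves VZ EZ \<and>
     F ` internal_vertices VY EY \<subseteq> internal_vertices VZ EZ \<and>
     (\<forall>v\<in>internal_vertices VY EY.
        branched_covering (f v) (SY v) (SZ (F v)) \<and>
        covering_space (SY v - marked_points EY iY v) (f v) (SZ (F v) - marked_points EZ iZ (F v)) \<and>
        (\<forall>e\<in>edges_at EY v. f v (iY v e) = iZ (F v) (F ` e))) \<and>
     (\<forall>v1 v2. {v1, v2} \<in> EY \<longrightarrow> v1 \<in> internal_vertices VY EY \<longrightarrow> v2 \<in> internal_vertices VY EY \<longrightarrow>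
        local_deg (f v1) (SY v1) (SZ (F v1)) (iY v1 {v1, v2}) =
        local_deg (f v2) (SY v2) (SZ (F v2)) (iY v2 {v1, v2}))"

end

theory Submission
  imports Defs
begin

lemma topspace_tree_top: "topspace (tree_top V E) = tree_points V E"
proof -
  have "openin (tree_top V E) (tree_points V E)"
    by (simp add: openin_tree_top tree_open_def tree_points_def)
  moreover have "\<And>U. openin (tree_top V E) U \<Longrightarrow> U \<subseteq> tree_points V E"
    by (simp add: openin_tree_top tree_open_def)
  ultimately show ?thesis
    by (metis openin_subset subset_antisym openin_topspace)
qed

lemma graph_edge_in: "is_graph V E \<Longrightarrow> e \<in> E \<Longrightarrow> x \<in> e \<Longrightarrow> x \<in> V"
proof -
  assume G: "is_graph V E" and e: "e \<in> E" and x: "x \<in> e"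
  from G e obtain a b where "a \<in> V" "b \<in> V" "e = {a, b}" unfolding is_graph_def by meson
  then show "x \<in> V" using x by auto
qed

lemma closure_edges:
  assumes "is_graph V E" "A \<subseteq> tree_points V E"
  shows "sub_edges (tree_top V E closure_of A) = sub_edges A"
proof -
  have "Inr e \<in> tree_top V E closure_of A \<longleftrightarrow> Inr e \<in> A" for e
  proof
    assume h: "Inr e \<in> tree_top V E closure_of A"
    then have "Inr e \<in> topspace (tree_top V E)" by (meson closure_of_subset_topspace subsetD)
    then have "e \<in> E" unfolding topspace_tree_top tree_points_def by auto
    then have "openin (tree_top V E) {Inr e}"
      by (simp add: openin_tree_top tree_open_def tree_points_def)
    moreover have "Inr e \<in> {Inr e}" by simp
    ultimately have "\<exists>y. y \<in> A \<and> y \<in> {Inr e}"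
      using h unfolding in_closure_of by (meson)
    then show "Inr e \<in> A" by blast
  next
    assume "Inr e \<in> A" then show "Inr e \<in> tree_top V E closure_of A"
      using closure_of_subset[of A "tree_top V E"] assms(2) by (auto simp: topspace_tree_top)
  qed
  then show ?thesis by (simp add: sub_edges_def)
qed

lemma closure_vertices:
  assumes "is_graph V E" "A \<subseteq> tree_points V E"
  shows "sub_vertices (tree_top V E closure_of A) =
     {v. Inl v \<in> A} \<union> {v. \<exists>e. Inr e \<in> A \<and> v \<in> e}"
proof -
  have "Inl v \<in> tree_top V E closure_of A \<longleftrightarrow> Inl v \<in> A \<or> (\<exists>e. Inr e \<in> A \<and> v \<in> e)" for v
  proof
    assume h: "Inl v \<in> tree_top V E closure_of A"
    then have "Inl v \<in> topspace (tree_top V E)" by (meson closure_of_subset_topspace subsetD)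
    then have "Inl v \<in> tree_points V E" unfolding topspace_tree_top .
    then have vV: "v \<in> V" by (auto simp: tree_points_def)
    define Ob where "Ob = {Inl v} \<union> Inr ` {e \<in> E. v \<in> e}"
    have oO: "openin (tree_top V E) Ob"
      unfolding openin_tree_top tree_open_def Ob_def tree_points_def using vV by blast
    have "Inl v \<in> Ob" unfolding Ob_def by blast
    then have "\<exists>y. y \<in> A \<and> y \<in> Ob" using h oO unfolding in_closure_of by meson
    then obtain y where y: "y \<in> A" "y \<in> Ob" by blast
    show "Inl v \<in> A \<or> (\<exists>e. Inr e \<in> A \<and> v \<in> e)"
    proof (cases "y = Inl v")
      case True then show ?thesis using y by blast
    next
      case False
      then obtain e where "y = Inr e" "v \<in> e" using y(2) unfolding Ob_def by blast
      then show ?thesis using y by blast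
    qed
  next
    assume h: "Inl v \<in> A \<or> (\<exists>e. Inr e \<in> A \<and> v \<in> e)"
    show "Inl v \<in> tree_top V E closure_of A"
    proof (cases "Inl v \<in> A")
      case True then show ?thesis using closure_of_subset[of A "tree_top V E"] assms(2) by (auto simp: topspace_tree_top)
    next
      case False
      then obtain e where e: "Inr e \<in> A" "v \<in> e" using h by blast
      then have eE: "e \<in> E" using assms(2) by (auto simp: tree_points_def)
      then have "v \<in> V" using graph_edge_in[OF assms(1) eE e(2)] by simp
      then have top: "Inl v \<in> topspace (tree_top V E)" by (simp add: topspace_tree_top tree_points_def)
      have "\<exists>y. y \<in> A \<and> y \<in> T" if "Inl v \<in> T" "openin (tree_top V E) T" for T
      proof -
        have "Inr e \<in> T" using that eE e(2) unfolding openin_tree_top tree_open_def by blast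
        then show ?thesis using e(1) by blast
      qed
      then show ?thesis unfolding in_closure_of using top by meson
    qed
  qed
  then show ?thesis unfolding sub_vertices_def by (simp add: set_eq_iff)
qed

lemma separation:
  assumes G: "is_graph V E" and AT: "A \<subseteq> tree_points V E"
    and C: "connectedin (tree_top V E) A"
    and Q: "\<And>q. q \<in> Q \<Longrightarrow> Inl q \<notin> A"
    and QE: "\<And>e. Inr e \<in> A \<Longrightarrow> \<not> e \<subseteq> Q"
    and a: "a \<notin> Q" "Inl a \<in> A \<or> (\<exists>e. Inr e \<in> A \<and> a \<in> e)"
  defines "Rel \<equiv> (\<lambda>x y. {x, y} \<in> sub_edges A \<and> x \<notin> Q \<and> y \<notin> Q)"
  shows "(\<forall>b. Inl b \<in> A \<longrightarrow> Rel\<^sup>*\<^sup>* a b) \<and> (\<forall>e z. Inr e \<in> A \<longrightarrow> z \<in> e \<longrightarrow> z \<notin> Q \<longrightarrow> Rel\<^sup>*\<^sup>* a z)"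
proof -
  define R where "R = {b. Rel\<^sup>*\<^sup>* a b}"
  have RQ0: "Rel\<^sup>*\<^sup>* a b \<Longrightarrow> b \<notin> Q" for b
    by (induction b rule: rtranclp_induct) (use a(1) in \<open>auto simp: Rel_def\<close>)
  have RQ: "b \<in> R \<Longrightarrow> b \<notin> Q" for b using RQ0 unfolding R_def by blast
  have aV: "a \<in> V"
  proof (cases "Inl a \<in> A")
    case True then show ?thesis using AT by (auto simp: tree_points_def)
  next
    case False
    then obtain e where e: "Inr e \<in> A" "a \<in> e" using a(2) by blast
    then have eE: "e \<in> E" using AT by (auto simp: tree_points_def)
    show ?thesis using graph_edge_in[OF G eE e(2)] .
  qed
  have RV0: "Rel\<^sup>*\<^sup>* a b \<Longrightarrow> b \<in> V" for b
  proof (induction rule: rtranclp_induct)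
    case base then show ?case using aV .
  next
    case (step y z)
    then have "Inr {y, z} \<in> A" by (simp add: Rel_def sub_edges_def)
    then have yz: "{y,z} \<in> E" using AT by (auto simp: tree_points_def)
    show ?case using graph_edge_in[OF G yz, of z] by simp
  qed
  have RV: "b \<in> R \<Longrightarrow> b \<in> V" for b using RV0 unfolding R_def by blast
  define U where "U = Inl ` R \<union> Inr ` {e \<in> E. e \<inter> R \<noteq> {}}"
  define W where "W = Inl ` (V - R - Q) \<union> Inr ` {e \<in> E. e \<inter> (V - R - Q) \<noteq> {}}"
  have oU: "openin (tree_top V E) U"
    unfolding openin_tree_top tree_open_def
  proof (intro conjI allI impI)
    show "U \<subseteq> tree_points V E" unfolding U_def tree_points_def using RV by blast
  next
    fix v e assume h: "Inl v \<in> U" "e \<in> E" "v \<in> e"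
    then have "v \<in> R" unfolding U_def by blast
    then show "Inr e \<in> U" unfolding U_def using h by blast
  qed
  have oW: "openin (tree_top V E) W"
    unfolding openin_tree_top tree_open_def
  proof (intro conjI allI impI)
    show "W \<subseteq> tree_points V E" unfolding W_def tree_points_def by blast
  next
    fix v e assume h: "Inl v \<in> W" "e \<in> E" "v \<in> e"
    then have "v \<in> V - R - Q" unfolding W_def by blast
    then show "Inr e \<in> W" unfolding W_def using h by blast
  qed
  have cov: "A \<subseteq> U \<union> W"
  proof
    fix p assume p: "p \<in> A"
    show "p \<in> U \<union> W"
    proof (cases p)
      case (Inl b)
      then have "b \<in> V" "b \<notin> Q" using p Q AT by (auto simp: tree_points_def)
      then show ?thesis unfolding U_def W_def using Inl by blast
    next
      case (Inr e)
      then have eE: "e \<in> E" using p AT by (auto simp: tree_points_def)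
      obtain z where z: "z \<in> e" "z \<notin> Q" using QE p Inr by blast
      have "z \<in> V" using graph_edge_in[OF G eE z(1)] .
      show ?thesis
      proof (cases "z \<in> R")
        case True
        then have "Inr e \<in> U" unfolding U_def using eE z by blast
        then show ?thesis using Inr by blast
      next
        case False
        then have "Inr e \<in> W" unfolding W_def using eE z \<open>z \<in> V\<close> by blast
        then show ?thesis using Inr by blast
      qed
    qed
  qed
  have disj: "U \<inter> W \<inter> A = {}"
  proof (rule ccontr)
    assume "U \<inter> W \<inter> A \<noteq> {}"
    then obtain p where p: "p \<in> U" "p \<in> W" "p \<in> A" by blast
    have "\<not> (\<exists>b. p = Inl b)"
    proof
      assume "\<exists>b. p = Inl b"
      then obtain b where "p = Inl b" by blast
      then have "b \<in> R" "b \<notin> R" using p(1,2) unfolding U_def W_def by auto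
      then show False by blast
    qed
    then obtain e where pe: "p = Inr e" by (cases p) auto
    have "Inr e \<in> Inr ` {e \<in> E. e \<inter> R \<noteq> {}}" using p(1) pe unfolding U_def by blast
    then obtain y where y: "e \<in> E" "y \<in> e" "y \<in> R" by auto
    have "Inr e \<in> Inr ` {e \<in> E. e \<inter> (V - R - Q) \<noteq> {}}" using p(2) pe unfolding W_def by blast
    then obtain z where z: "z \<in> e" "z \<in> V" "z \<notin> R" "z \<notin> Q" by auto
    have e: "Inr e \<in> A" "e \<in> E" "y \<in> e" "y \<in> R" "z \<in> e" "z \<in> V" "z \<notin> R" "z \<notin> Q"
      using p pe y z by auto
    obtain p q where pq: "p \<noteq> q" "e = {p, q}" using G e(2) unfolding is_graph_def by blast
    have "y \<noteq> z" using e by blast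
    then have "e = {y, z}" using pq e by auto
    then have "Rel y z" using e RQ by (auto simp: Rel_def sub_edges_def)
    then have "z \<in> R" using e(4) unfolding R_def by auto
    then show False using e by blast
  qed
  have aR: "a \<in> R" unfolding R_def by simp
  have UA: "U \<inter> A \<noteq> {}"
  proof (cases "Inl a \<in> A")
    case True then show ?thesis using aR unfolding U_def by blast
  next
    case False
    then obtain e where "Inr e \<in> A" "a \<in> e" using a by blast
    moreover then have "e \<in> E" using AT by (auto simp: tree_points_def)
    ultimately have "Inr e \<in> U" using aR unfolding U_def by auto
    then show ?thesis using \<open>Inr e \<in> A\<close> by blast
  qed
  have no: "\<And>E1 E2. openin (tree_top V E) E1 \<Longrightarrow> openin (tree_top V E) E2 \<Longrightarrow> A \<subseteq> E1 \<union> E2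
     \<Longrightarrow> E1 \<inter> E2 \<inter> A = {} \<Longrightarrow> E1 \<inter> A \<noteq> {} \<Longrightarrow> E2 \<inter> A = {}"
  proof (rule ccontr)
    fix E1 E2
    assume h: "openin (tree_top V E) E1" "openin (tree_top V E) E2" "A \<subseteq> E1 \<union> E2"
      "E1 \<inter> E2 \<inter> A = {}" "E1 \<inter> A \<noteq> {}" "E2 \<inter> A \<noteq> {}"
    then have ex: "\<exists>E1 E2. openin (tree_top V E) E1 \<and> openin (tree_top V E) E2 \<and> A \<subseteq> E1 \<union> E2
      \<and> E1 \<inter> E2 \<inter> A = {} \<and> E1 \<inter> A \<noteq> {} \<and> E2 \<inter> A \<noteq> {}" by (intro exI conjI)
    have "\<not> (\<exists>E1 E2. openin (tree_top V E) E1 \<and> openin (tree_top V E) E2 \<and> A \<subseteq> E1 \<union> E2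
      \<and> E1 \<inter> E2 \<inter> A = {} \<and> E1 \<inter> A \<noteq> {} \<and> E2 \<inter> A \<noteq> {})"
      using C unfolding connectedin by (rule conjunct2)
    then show False using ex by (rule notE)
  qed
  have WA: "W \<inter> A = {}" by (rule no[OF oU oW cov disj UA])
  show ?thesis
  proof (intro conjI allI impI)
    fix b assume b: "Inl b \<in> A"
    then have "b \<in> V" "b \<notin> Q" using AT Q by (auto simp: tree_points_def)
    show "Rel\<^sup>*\<^sup>* a b"
    proof (rule ccontr)
      assume "\<not> Rel\<^sup>*\<^sup>* a b"
      then have "b \<in> V - R - Q" using \<open>b \<in> V\<close> \<open>b \<notin> Q\<close> unfolding R_def by simp
      then have "Inl b \<in> W" unfolding W_def by blast
      then show False using WA b by blast
    qed
  next
    fix e z assume ez: "Inr e \<in> A" "z \<in> e" "z \<notin> Q"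
    then have eE: "e \<in> E" using AT by (auto simp: tree_points_def)
    then have "z \<in> V" using graph_edge_in[OF G eE ez(2)] by simp
    show "Rel\<^sup>*\<^sup>* a z"
    proof (rule ccontr)
      assume "\<not> Rel\<^sup>*\<^sup>* a z"
      then have "z \<in> V - R - Q" using \<open>z \<in> V\<close> ez(3) unfolding R_def by simp
      then have "Inr e \<in> W" unfolding W_def using eE ez(2) by blast
      then show False using WA ez(1) by blast
    qed
  qed
qed

lemma pair_connected:
  assumes "v \<in> V" "e \<in> E" "v \<in> e"
  shows "connectedin (tree_top V E) {Inl v, Inr e}"
proof -
  have sub: "{Inl v, Inr e} \<subseteq> topspace (tree_top V E)"
    using assms by (simp add: topspace_tree_top tree_points_def)
  have "False" if "openin (tree_top V E) E1" "openin (tree_top V E) E2"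
     "{Inl v, Inr e} \<subseteq> E1 \<union> E2" "E1 \<inter> E2 \<inter> {Inl v, Inr e} = {}"
     "E1 \<inter> {Inl v, Inr e} \<noteq> {}" "E2 \<inter> {Inl v, Inr e} \<noteq> {}" for E1 E2
  proof -
    have h1: "Inl v \<in> E1 \<Longrightarrow> Inr e \<in> E1" using that(1) assms
      by (simp add: openin_tree_top tree_open_def)
    have h2: "Inl v \<in> E2 \<Longrightarrow> Inr e \<in> E2" using that(2) assms
      by (simp add: openin_tree_top tree_open_def)
    show False using h1 h2 that(3-6) by blast
  qed
  then have "\<not> (\<exists>E1 E2. openin (tree_top V E) E1 \<and> openin (tree_top V E) E2 \<and> {Inl v, Inr e} \<subseteq> E1 \<union> E2
      \<and> E1 \<inter> E2 \<inter> {Inl v, Inr e} = {} \<and> E1 \<inter> {Inl v, Inr e} \<noteq> {} \<and> E2 \<inter> {Inl v, Inr e} \<noteq> {})"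
    by blast
  then show ?thesis unfolding connectedin using sub by blast
qed


lemma simple_path:
  assumes "R\<^sup>*\<^sup>* x y"
  shows "\<exists>ps. ps \<noteq> [] \<and> hd ps = x \<and> last ps = y \<and> distinct ps \<and>
           (\<forall>k. Suc k < length ps \<longrightarrow> R (ps ! k) (ps ! Suc k))"
  using assms
proof (induction rule: rtranclp_induct)
  case base
  show ?case by (rule exI[of _ "[x]"]) simp
next
  case (step y z)
  from step.IH obtain ps where ps: "ps \<noteq> []" "hd ps = x" "last ps = y" "distinct ps"
    "\<forall>k. Suc k < length ps \<longrightarrow> R (ps ! k) (ps ! Suc k)" by auto
  show ?case
  proof (cases "z \<in> set ps")
    case True
    then obtain i where i: "i < length ps" "ps ! i = z" by (auto simp: in_set_conv_nth)
    define qs where "qs = take (Suc i) ps"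
    have q1: "qs = take i ps @ [ps ! i]" unfolding qs_def using i(1) by (simp add: take_Suc_conv_app_nth)
    have "qs \<noteq> []" using q1 by simp
    moreover have "hd qs = x" unfolding qs_def using ps(1,2) by (cases ps) auto
    moreover have "last qs = z" using q1 i(2) by simp
    moreover have "distinct qs" unfolding qs_def using ps(4) by simp
    moreover have "\<forall>k. Suc k < length qs \<longrightarrow> R (qs ! k) (qs ! Suc k)"
      unfolding qs_def using ps(5) i(1) by simp
    ultimately show ?thesis by auto
  next
    case False
    define qs where "qs = ps @ [z]"
    have "qs \<noteq> []" unfolding qs_def by simp
    moreover have "hd qs = x" unfolding qs_def using ps(1,2) by simp
    moreover have "last qs = z" unfolding qs_def by simp
    moreover have "distinct qs" unfolding qs_def using ps(4) False by simp
    moreover have "\<forall>k. Suc k < length qs \<longrightarrow> R (qs ! k) (qs ! Suc k)"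
    proof (intro allI impI)
      fix k assume k: "Suc k < length qs"
      show "R (qs ! k) (qs ! Suc k)"
      proof (cases "Suc k < length ps")
        case True
        then show ?thesis unfolding qs_def using ps(5) by (simp add: nth_append)
      next
        case False
        then have kk: "Suc k = length ps" using k unfolding qs_def by simp
        then have "k = length ps - 1" by simp
        then have "ps ! k = y" using ps(1,3) by (simp add: last_conv_nth)
        then show ?thesis unfolding qs_def using kk step.hyps(2) by (simp add: nth_append)
      qed
    qed
    ultimately show ?thesis by auto
  qed
qed

lemma at_most_one_edge:
  assumes T: "is_tree V E" and AT: "A \<subseteq> tree_points V E"
    and C: "connectedin (tree_top V E) A"
    and v: "Inl v \<notin> A" and e1: "Inr e1 \<in> A" "v \<in> e1" and e2: "Inr e2 \<in> A" "v \<in> e2"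
  shows "e1 = e2"
proof (rule ccontr)
  assume ne: "e1 \<noteq> e2"
  have G: "is_graph V E" using T unfolding is_tree_def by simp
  have E1: "e1 \<in> E" using e1 AT by (auto simp: tree_points_def)
  have E2: "e2 \<in> E" using e2 AT by (auto simp: tree_points_def)
  obtain x1 where x1: "e1 = {v, x1}" "x1 \<noteq> v"
  proof -
    from G E1 obtain a b where "a \<noteq> b" "e1 = {a, b}" unfolding is_graph_def by meson
    then show ?thesis using that e1(2) by (metis insert_commute insertE singletonD)
  qed
  obtain x2 where x2: "e2 = {v, x2}" "x2 \<noteq> v"
  proof -
    from G E2 obtain a b where "a \<noteq> b" "e2 = {a, b}" unfolding is_graph_def by meson
    then show ?thesis using that e2(2) by (metis insert_commute insertE singletonD)
  qed
  have x12: "x1 \<noteq> x2" using ne x1 x2 by auto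
  define Rel where "Rel = (\<lambda>x y. {x, y} \<in> sub_edges A \<and> x \<notin> {v} \<and> y \<notin> {v})"
  have QE: "\<not> e \<subseteq> {v}" if "Inr e \<in> A" for e
  proof -
    have "e \<in> E" using that AT by (auto simp: tree_points_def)
    then obtain a b where "a \<noteq> b" "e = {a, b}" using G unfolding is_graph_def by meson
    then show ?thesis by auto
  qed
  have sep: "(\<forall>b. Inl b \<in> A \<longrightarrow> Rel\<^sup>*\<^sup>* x1 b) \<and> (\<forall>e z. Inr e \<in> A \<longrightarrow> z \<in> e \<longrightarrow> z \<notin> {v} \<longrightarrow> Rel\<^sup>*\<^sup>* x1 z)"
    unfolding Rel_def
    by (rule separation[OF G AT C]) (use v QE e1 x1 in auto)
  have r12: "Rel\<^sup>*\<^sup>* x1 x2" using sep e2(1) x2 by auto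
  obtain ps where ps: "ps \<noteq> []" "hd ps = x1" "last ps = x2" "distinct ps"
    "\<forall>k. Suc k < length ps \<longrightarrow> Rel (ps ! k) (ps ! Suc k)"
    using simple_path[OF r12] by auto
  have RE: "Rel a b \<Longrightarrow> {a, b} \<in> E" for a b
    unfolding Rel_def sub_edges_def using AT by (auto simp: tree_points_def)
  have nv: "ps ! k \<noteq> v" if "k < length ps" for k
  proof (cases k)
    case 0 then show ?thesis using ps(1,2) x1(2) by (simp add: hd_conv_nth)
  next
    case (Suc j) then show ?thesis using ps(5) that unfolding Rel_def by auto
  qed
  have inV: "ps ! k \<in> V" if "k < length ps" for k
  proof (cases k)
    case 0 then have "ps ! k = x1" using ps(1,2) by (simp add: hd_conv_nth)
    then show ?thesis using graph_edge_in[OF G E1, of x1] x1(1) by simp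
  next
    case (Suc j)
    then have "{ps ! j, ps ! k} \<in> E" using RE ps(5) that by simp
    then show ?thesis using graph_edge_in[OF G, of "{ps ! j, ps ! k}" "ps ! k"] by simp
  qed
  have vV: "v \<in> V" using graph_edge_in[OF G E1 e1(2)] .
  have len: "length ps \<ge> 2"
  proof (rule ccontr)
    assume "\<not> length ps \<ge> 2"
    moreover have "length ps \<noteq> 0" using ps(1) by simp
    ultimately have "length ps = 1" by linarith
    then have "hd ps = last ps" by (cases ps) auto
    then show False using ps(2,3) x12 by simp
  qed
  define vs where "vs = v # ps"
  have "is_cycle E vs"
    unfolding is_cycle_def
  proof (intro conjI allI impI)
    show "3 \<le> length vs" unfolding vs_def using len by simp
    show "distinct vs" unfolding vs_def using ps(4) nv by (auto simp: in_set_conv_nth)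
    show "{last vs, hd vs} \<in> E" unfolding vs_def using ps(1,3) E2 x2(1) by (simp add: insert_commute)
  next
    fix k assume k: "Suc k < length vs"
    show "{vs ! k, vs ! Suc k} \<in> E"
    proof (cases k)
      case 0
      then show ?thesis unfolding vs_def using ps(1,2) E1 x1(1) by (simp add: hd_conv_nth)
    next
      case (Suc j)
      then show ?thesis unfolding vs_def using k RE ps(5) by (simp add: vs_def)
    qed
  qed
  moreover have "set vs \<subseteq> V" unfolding vs_def using vV inV by (auto simp: in_set_conv_nth)
  ultimately show False using T unfolding is_tree_def by meson
qed


lemma is_cycle_mono: "is_cycle E' vs \<Longrightarrow> E' \<subseteq> E \<Longrightarrow> is_cycle E vs"
  unfolding is_cycle_def by (meson subsetD)

lemma open_edges_at:
  assumes AT: "A \<subseteq> tree_points V E" and O: "tree_open V E A" and v: "Inl v \<in> A"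
  shows "edges_at (sub_edges A) v = edges_at E v"
proof -
  have "e \<in> edges_at (sub_edges A) v \<longleftrightarrow> e \<in> edges_at E v" for e
  proof
    assume "e \<in> edges_at (sub_edges A) v"
    then have "Inr e \<in> A" "v \<in> e" unfolding edges_at_def sub_edges_def by simp_all
    then show "e \<in> edges_at E v" using AT unfolding edges_at_def tree_points_def by auto
  next
    assume "e \<in> edges_at E v"
    then have "e \<in> E" "v \<in> e" unfolding edges_at_def by simp_all
    then have "Inr e \<in> A" using O v unfolding tree_open_def by simp
    then show "e \<in> edges_at (sub_edges A) v" using \<open>v \<in> e\<close> unfolding edges_at_def sub_edges_def by simp
  qed
  then show ?thesis by (simp add: set_eq_iff)
qed

lemma boundary_edges_at:
  assumes T: "is_tree V E" and AT: "A \<subseteq> tree_points V E"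
    and C: "connectedin (tree_top V E) A"
    and v: "Inl v \<notin> A" and e: "Inr e \<in> A" "v \<in> e"
  shows "edges_at (sub_edges A) v = {e}"
proof -
  have "e' \<in> edges_at (sub_edges A) v \<longleftrightarrow> e' = e" for e'
  proof
    assume "e' \<in> edges_at (sub_edges A) v"
    then have "Inr e' \<in> A" "v \<in> e'" unfolding edges_at_def sub_edges_def by simp_all
    then show "e' = e" using at_most_one_edge[OF T AT C v _ _ e] by simp
  next
    assume "e' = e" then show "e' \<in> edges_at (sub_edges A) v"
      using e unfolding edges_at_def sub_edges_def by simp
  qed
  then show ?thesis by (simp add: set_eq_iff)
qed

locale open_sub =
  fixes V :: "'v set" and E :: "'v set set" and A :: "('v + 'v set) set"
  assumes T: "is_tree V E" and O: "tree_open V E A" and C: "connectedin (tree_top V E) A"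
    and NE: "A \<noteq> {}"
begin

lemma G: "is_graph V E" using T unfolding is_tree_def by simp

lemma AT: "A \<subseteq> tree_points V E" using O unfolding tree_open_def by simp

lemma VA: "sub_vertices (tree_top V E closure_of A) = {v. Inl v \<in> A} \<union> {v. \<exists>e. Inr e \<in> A \<and> v \<in> e}"
  using closure_vertices[OF G AT] .

lemma EA: "sub_edges (tree_top V E closure_of A) = sub_edges A"
  using closure_edges[OF G AT] .

lemma VA_sub: "sub_vertices (tree_top V E closure_of A) \<subseteq> V"
proof
  fix v assume "v \<in> sub_vertices (tree_top V E closure_of A)"
  then have "Inl v \<in> A \<or> (\<exists>e. Inr e \<in> A \<and> v \<in> e)" unfolding VA by simp
  then show "v \<in> V"
  proof
    assume "Inl v \<in> A" then show ?thesis using AT unfolding tree_points_def by auto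
  next
    assume "\<exists>e. Inr e \<in> A \<and> v \<in> e"
    then obtain e where e: "Inr e \<in> A" "v \<in> e" by auto
    then have eE: "e \<in> E" using AT unfolding tree_points_def by auto
    show ?thesis using graph_edge_in[OF G eE e(2)] .
  qed
qed

lemma edges_in: "Inr e \<in> A \<Longrightarrow> e \<in> E"
  using AT unfolding tree_points_def by auto

lemma edges_at_in:
  assumes "Inl v \<in> A" shows "edges_at (sub_edges (tree_top V E closure_of A)) v = edges_at E v"
  unfolding EA using open_edges_at[OF AT O assms] .

lemma edges_at_bd:
  assumes "v \<in> sub_vertices (tree_top V E closure_of A)" "Inl v \<notin> A"
  shows "card (edges_at (sub_edges (tree_top V E closure_of A)) v) = 1"
    "\<exists>e. Inr e \<in> A \<and> v \<in> e"
proof -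
  show ex: "\<exists>e. Inr e \<in> A \<and> v \<in> e" using assms unfolding VA by simp
  then obtain e where e: "Inr e \<in> A" "v \<in> e" by auto
  show "card (edges_at (sub_edges (tree_top V E closure_of A)) v) = 1"
    unfolding EA using boundary_edges_at[OF T AT C assms(2) e] by simp
qed

lemma internal_char:
  "v \<in> internal_vertices (sub_vertices (tree_top V E closure_of A)) (sub_edges (tree_top V E closure_of A))
   \<longleftrightarrow> Inl v \<in> A \<and> v \<in> internal_vertices V E"
proof
  assume h: "v \<in> internal_vertices (sub_vertices (tree_top V E closure_of A)) (sub_edges (tree_top V E closure_of A))"
  then have vA: "v \<in> sub_vertices (tree_top V E closure_of A)"
    and c: "card (edges_at (sub_edges (tree_top V E closure_of A)) v) \<noteq> 1"
    unfolding internal_vertices_def by simp_all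
  have inA: "Inl v \<in> A" using edges_at_bd(1)[OF vA] c by blast
  have "v \<in> V" using VA_sub vA by auto
  then show "Inl v \<in> A \<and> v \<in> internal_vertices V E"
    using inA c edges_at_in[OF inA] unfolding internal_vertices_def by simp
next
  assume h: "Inl v \<in> A \<and> v \<in> internal_vertices V E"
  then have "v \<in> sub_vertices (tree_top V E closure_of A)" unfolding VA by simp
  then show "v \<in> internal_vertices (sub_vertices (tree_top V E closure_of A)) (sub_edges (tree_top V E closure_of A))"
    using h edges_at_in[of v] unfolding internal_vertices_def by simp
qed

lemma leaves_char:
  "v \<in> leaves (sub_vertices (tree_top V E closure_of A)) (sub_edges (tree_top V E closure_of A))
   \<longleftrightarrow> (v \<in> sub_vertices (tree_top V E closure_of A) \<and> Inl v \<notin> A) \<or> (Inl v \<in> A \<and> v \<in> leaves V E)"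
proof
  assume h: "v \<in> leaves (sub_vertices (tree_top V E closure_of A)) (sub_edges (tree_top V E closure_of A))"
  then have vA: "v \<in> sub_vertices (tree_top V E closure_of A)"
    and c: "card (edges_at (sub_edges (tree_top V E closure_of A)) v) = 1"
    unfolding leaves_def by simp_all
  have "v \<in> V" using VA_sub vA by auto
  then show "(v \<in> sub_vertices (tree_top V E closure_of A) \<and> Inl v \<notin> A) \<or> (Inl v \<in> A \<and> v \<in> leaves V E)"
    using vA c edges_at_in[of v] unfolding leaves_def by auto
next
  assume h: "(v \<in> sub_vertices (tree_top V E closure_of A) \<and> Inl v \<notin> A) \<or> (Inl v \<in> A \<and> v \<in> leaves V E)"
  then show "v \<in> leaves (sub_vertices (tree_top V E closure_of A)) (sub_edges (tree_top V E closure_of A))"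
  proof
    assume h1: "v \<in> sub_vertices (tree_top V E closure_of A) \<and> Inl v \<notin> A"
    then show ?thesis using edges_at_bd(1)[of v] unfolding leaves_def by simp
  next
    assume h2: "Inl v \<in> A \<and> v \<in> leaves V E"
    then have "v \<in> sub_vertices (tree_top V E closure_of A)" unfolding VA by simp
    then show ?thesis using h2 edges_at_in[of v] unfolding leaves_def by simp
  qed
qed

lemma sub_is_tree:
  "is_tree (sub_vertices (tree_top V E closure_of A)) (sub_edges (tree_top V E closure_of A))"
proof -
  let ?VA = "sub_vertices (tree_top V E closure_of A)"
  let ?EA = "sub_edges (tree_top V E closure_of A)"
  have fin: "finite ?VA" using VA_sub T unfolding is_tree_def by (meson finite_subset)
  obtain p where p: "p \<in> A" using NE by auto
  have ne: "?VA \<noteq> {}"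
  proof (cases p)
    case (Inl v) then show ?thesis using p unfolding VA by auto
  next
    case (Inr e)
    then have "e \<in> E" using p edges_in by simp
    then obtain a b where "e = {a, b}" using G unfolding is_graph_def by meson
    then show ?thesis using p Inr unfolding VA by auto
  qed
  have gr: "is_graph ?VA ?EA"
    unfolding is_graph_def
  proof
    fix e assume e0: "e \<in> ?EA"
    have "e \<in> sub_edges A" using e0 EA by simp
    then have eA: "Inr e \<in> A" unfolding sub_edges_def by simp
    then have "e \<in> E" using edges_in by simp
    then obtain a b where ab: "a \<noteq> b" "a \<in> V" "b \<in> V" "e = {a, b}" using G unfolding is_graph_def by meson
    then have "a \<in> ?VA" "b \<in> ?VA" using eA unfolding VA by auto
    then show "\<exists>a b. a \<noteq> b \<and> a \<in> ?VA \<and> b \<in> ?VA \<and> e = {a, b}" using ab by auto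
  qed
  have reach: "(\<lambda>x y. {x, y} \<in> ?EA)\<^sup>*\<^sup>* a b" if a: "a \<in> ?VA" and b: "b \<in> ?VA" for a b
  proof -
    define Rel where "Rel = (\<lambda>x y. {x, y} \<in> sub_edges A \<and> x \<notin> ({}::'v set) \<and> y \<notin> {})"
    have Rel_eq: "Rel = (\<lambda>x y. {x, y} \<in> ?EA)" unfolding Rel_def EA by simp
    have all: "Rel\<^sup>*\<^sup>* a c" if a: "a \<in> ?VA" and c: "c \<in> ?VA" for a c
    proof -
      have sep: "(\<forall>b. Inl b \<in> A \<longrightarrow> Rel\<^sup>*\<^sup>* a b) \<and> (\<forall>e z. Inr e \<in> A \<longrightarrow> z \<in> e \<longrightarrow> z \<notin> {} \<longrightarrow> Rel\<^sup>*\<^sup>* a z)"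
        unfolding Rel_def
      proof (rule separation[OF G AT C])
        show "Inl a \<in> A \<or> (\<exists>e. Inr e \<in> A \<and> a \<in> e)" using a unfolding VA by simp
      next
        fix e assume "Inr e \<in> A"
        then have "e \<in> E" using edges_in by simp
        then obtain a b where "a \<noteq> b" "e = {a, b}" using G unfolding is_graph_def by meson
        then show "\<not> e \<subseteq> {}" by simp
      qed simp_all
      have "Inl c \<in> A \<or> (\<exists>e. Inr e \<in> A \<and> c \<in> e)" using c unfolding VA by simp
      then show ?thesis using sep by auto
    qed
    have "Rel\<^sup>*\<^sup>* a b" using all[OF a b] .
    then show ?thesis unfolding Rel_eq .
  qed
  have gc: "graph_connected ?VA ?EA" unfolding graph_connected_def using reach by simp
  have nc: "\<not> (\<exists>vs. set vs \<subseteq> ?VA \<and> is_cycle ?EA vs)"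
  proof
    assume "\<exists>vs. set vs \<subseteq> ?VA \<and> is_cycle ?EA vs"
    then obtain vs where vs: "set vs \<subseteq> ?VA" "is_cycle ?EA vs" by auto
    have "sub_edges A \<subseteq> E" unfolding sub_edges_def using edges_in by auto
    then have "?EA \<subseteq> E" using EA by simp
    then have "is_cycle E vs" using is_cycle_mono[OF vs(2)] by simp
    moreover have "set vs \<subseteq> V" using vs(1) VA_sub by auto
    ultimately show False using T unfolding is_tree_def by meson
  qed
  show ?thesis unfolding is_tree_def using fin ne gr gc nc by simp
qed

end


theorem lemma2p25:
  fixes VY :: "'v set" and EY :: "'v set set"
    and SY :: "'v \<Rightarrow> 'a::topological_space set" and iY :: "'v \<Rightarrow> 'v set \<Rightarrow> 'a"
    and VZ :: "'w set" and EZ :: "'w set set"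
    and SZ :: "'w \<Rightarrow> 'b::topological_space set" and iZ :: "'w \<Rightarrow> 'w set \<Rightarrow> 'b"
    and F :: "'v \<Rightarrow> 'w" and f :: "'v \<Rightarrow> 'a \<Rightarrow> 'b"
    and T2 :: "('w + 'w set) set" and T1 :: "('v + 'v set) set"
  assumes "tree_of_spheres VY EY SY iY"
    and "tree_of_spheres VZ EZ SZ iZ"
    and "tos_cover VY EY SY iY VZ EZ SZ iZ F f"
    and "T2 \<noteq> {}"
    and "openin (tree_top VZ EZ) T2"
    and "connectedin (tree_top VZ EZ) T2"
    and "T1 \<in> connected_components_of
               (subtopology (tree_top VY EY) {p \<in> tree_points VY EY. tree_map F p \<in> T2})"
  shows "tree_of_spheres_data (sub_vertices (tree_top VY EY closure_of T1))
            (sub_edges (tree_top VY EY closure_of T1)) SY iY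
     \<and> tree_of_spheres_data (sub_vertices (tree_top VZ EZ closure_of T2))
            (sub_edges (tree_top VZ EZ closure_of T2)) SZ iZ
     \<and> tos_cover (sub_vertices (tree_top VY EY closure_of T1))
            (sub_edges (tree_top VY EY closure_of T1)) SY iY
          (sub_vertices (tree_top VZ EZ closure_of T2))
            (sub_edges (tree_top VZ EZ closure_of T2)) SZ iZ F f"
proof -
  note TY = assms(1) and TZ = assms(2) and cov = assms(3)
  define P where "P = {p \<in> tree_points VY EY. tree_map F p \<in> T2}"
  have comp: "T1 \<in> connected_components_of (subtopology (tree_top VY EY) P)"
    using assms(7) unfolding P_def .
  have tY: "is_tree VY EY" using TY unfolding tree_of_spheres_def tree_of_spheres_data_def by simp
  have tZ: "is_tree VZ EZ" using TZ unfolding tree_of_spheres_def tree_of_spheres_data_def by simp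
  have GY: "is_graph VY EY" using tY unfolding is_tree_def by simp
  have GZ: "is_graph VZ EZ" using tZ unfolding is_tree_def by simp
  have cov_V: "F ` VY \<subseteq> VZ" using cov unfolding tos_cover_def by simp
  have cov_E: "\<And>v w. {v, w} \<in> EY \<Longrightarrow> {F v, F w} \<in> EZ" using cov unfolding tos_cover_def by simp
  have cov_L: "F ` leaves VY EY \<subseteq> leaves VZ EZ" using cov unfolding tos_cover_def by simp
  have cov_I: "F ` internal_vertices VY EY \<subseteq> internal_vertices VZ EZ" using cov unfolding tos_cover_def by simp
  have cov_f: "\<And>v. v \<in> internal_vertices VY EY \<Longrightarrow>
        branched_covering (f v) (SY v) (SZ (F v)) \<and>
        covering_space (SY v - marked_points EY iY v) (f v) (SZ (F v) - marked_points EZ iZ (F v)) \<and>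
        (\<forall>e\<in>edges_at EY v. f v (iY v e) = iZ (F v) (F ` e))"
    using cov unfolding tos_cover_def by simp
  have cov_d: "\<And>v1 v2. {v1, v2} \<in> EY \<Longrightarrow> v1 \<in> internal_vertices VY EY \<Longrightarrow> v2 \<in> internal_vertices VY EY \<Longrightarrow>
        local_deg (f v1) (SY v1) (SZ (F v1)) (iY v1 {v1, v2}) =
        local_deg (f v2) (SY v2) (SZ (F v2)) (iY v2 {v1, v2})"
  proof -
    have cd: "\<forall>v1 v2. {v1, v2} \<in> EY \<longrightarrow> v1 \<in> internal_vertices VY EY \<longrightarrow> v2 \<in> internal_vertices VY EY \<longrightarrow>
        local_deg (f v1) (SY v1) (SZ (F v1)) (iY v1 {v1, v2}) =
        local_deg (f v2) (SY v2) (SZ (F v2)) (iY v2 {v1, v2})"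
      using cov unfolding tos_cover_def by (rule conjunct2[THEN conjunct2[THEN conjunct2[THEN conjunct2[THEN conjunct2]]]])
    fix v1 v2 assume "{v1, v2} \<in> EY" "v1 \<in> internal_vertices VY EY" "v2 \<in> internal_vertices VY EY"
    then show "local_deg (f v1) (SY v1) (SZ (F v1)) (iY v1 {v1, v2}) =
        local_deg (f v2) (SY v2) (SZ (F v2)) (iY v2 {v1, v2})" using cd by blast
  qed
  have O2: "tree_open VZ EZ T2" using assms(5) by (simp add: openin_tree_top)
  interpret Z: open_sub VZ EZ T2 using tZ O2 assms(6) assms(4) by unfold_locales
  have C1s: "connectedin (subtopology (tree_top VY EY) P) T1"
    using connectedin_connected_components_of[OF comp] .
  have C1: "connectedin (tree_top VY EY) T1" and T1P: "T1 \<subseteq> P"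
    using C1s unfolding connectedin_subtopology by simp_all
  have NE1: "T1 \<noteq> {}" using nonempty_connected_components_of[OF comp] .
  have maxl: "S \<subseteq> T1" if "connectedin (tree_top VY EY) S" "S \<subseteq> P" "S \<inter> T1 \<noteq> {}" for S
  proof -
    have "connectedin (subtopology (tree_top VY EY) P) S" using that(1,2) unfolding connectedin_subtopology by simp
    moreover have "\<not> disjnt T1 S" using that(3) unfolding disjnt_def by auto
    ultimately show ?thesis using connected_components_of_maximal[OF comp] by simp
  qed
  have map_edge: "F ` e \<in> EZ" if eY: "e \<in> EY" for e
  proof -
    obtain a b where "e = {a, b}" using GY eY unfolding is_graph_def by meson
    then show ?thesis using cov_E eY by simp
  qed
  have O1: "tree_open VY EY T1"
    unfolding tree_open_def
  proof (intro conjI allI impI)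
    show "T1 \<subseteq> tree_points VY EY" using T1P unfolding P_def by auto
  next
    fix v e assume h: "Inl v \<in> T1" "e \<in> EY" "v \<in> e"
    have vP: "Inl v \<in> P" using h(1) T1P by auto
    then have vV: "v \<in> VY" and FvT2: "Inl (F v) \<in> T2" unfolding P_def tree_points_def tree_map_def by auto
    have Fe: "F ` e \<in> EZ" using map_edge h(2) .
    have "Inr (F ` e) \<in> T2" using O2 FvT2 Fe h(3) unfolding tree_open_def by simp
    then have eP: "Inr e \<in> P" using h(2) unfolding P_def tree_points_def tree_map_def by simp
    have "{Inl v, Inr e} \<subseteq> T1"
      by (rule maxl) (use pair_connected[OF vV h(2,3)] vP eP h(1) in auto)
    then show "Inr e \<in> T1" by simp
  qed
  interpret Y: open_sub VY EY T1 using tY O1 C1 NE1 by unfold_locales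
  have T1map: "tree_map F p \<in> T2" if "p \<in> T1" for p using that T1P unfolding P_def by auto
  have FV: "F v \<in> sub_vertices (tree_top VZ EZ closure_of T2)" if v: "v \<in> sub_vertices (tree_top VY EY closure_of T1)" for v
  proof -
    have "Inl v \<in> T1 \<or> (\<exists>e. Inr e \<in> T1 \<and> v \<in> e)" using v unfolding Y.VA by simp
    then show ?thesis
    proof
      assume "Inl v \<in> T1"
      then have "Inl (F v) \<in> T2" using T1map[of "Inl v"] unfolding tree_map_def by simp
      then show ?thesis unfolding Z.VA by simp
    next
      assume "\<exists>e. Inr e \<in> T1 \<and> v \<in> e"
      then obtain e where e: "Inr e \<in> T1" "v \<in> e" by auto
      then have "Inr (F ` e) \<in> T2" using T1map[of "Inr e"] unfolding tree_map_def by simp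
      then show ?thesis unfolding Z.VA using e(2) by auto
    qed
  qed
  have bd: "Inl (F v) \<notin> T2" if v: "v \<in> sub_vertices (tree_top VY EY closure_of T1)" "Inl v \<notin> T1" for v
  proof
    assume FvT: "Inl (F v) \<in> T2"
    obtain e where e: "Inr e \<in> T1" "v \<in> e" using Y.edges_at_bd(2)[OF v] by auto
    have vV: "v \<in> VY" using Y.VA_sub v(1) by auto
    have eE: "e \<in> EY" using Y.edges_in e(1) .
    have vP: "Inl v \<in> P" using vV FvT unfolding P_def tree_points_def tree_map_def by simp
    have eP: "Inr e \<in> P" using e(1) T1P by auto
    have "{Inl v, Inr e} \<subseteq> T1"
      by (rule maxl) (use pair_connected[OF vV eE e(2)] vP eP e(1) in auto)
    then show False using v(2) by simp
  qed
  show ?thesis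
  proof (intro conjI)
    show "tree_of_spheres_data (sub_vertices (tree_top VY EY closure_of T1))
            (sub_edges (tree_top VY EY closure_of T1)) SY iY"
      unfolding tree_of_spheres_data_def
    proof (intro conjI ballI)
      show "is_tree (sub_vertices (tree_top VY EY closure_of T1)) (sub_edges (tree_top VY EY closure_of T1))"
        by (rule Y.sub_is_tree)
    next
      fix v assume "v \<in> internal_vertices (sub_vertices (tree_top VY EY closure_of T1)) (sub_edges (tree_top VY EY closure_of T1))"
      then have v: "Inl v \<in> T1" "v \<in> internal_vertices VY EY" using Y.internal_char by simp_all
      then show "SY v homeomorphic sphere (0::real^3) 1"
        "inj_on (iY v) (edges_at (sub_edges (tree_top VY EY closure_of T1)) v)"
        "iY v ` edges_at (sub_edges (tree_top VY EY closure_of T1)) v \<subseteq> SY v"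
        using TY Y.edges_at_in[OF v(1)] unfolding tree_of_spheres_def tree_of_spheres_data_def by simp_all
    qed
  next
    show "tree_of_spheres_data (sub_vertices (tree_top VZ EZ closure_of T2))
            (sub_edges (tree_top VZ EZ closure_of T2)) SZ iZ"
      unfolding tree_of_spheres_data_def
    proof (intro conjI ballI)
      show "is_tree (sub_vertices (tree_top VZ EZ closure_of T2)) (sub_edges (tree_top VZ EZ closure_of T2))"
        by (rule Z.sub_is_tree)
    next
      fix v assume "v \<in> internal_vertices (sub_vertices (tree_top VZ EZ closure_of T2)) (sub_edges (tree_top VZ EZ closure_of T2))"
      then have v: "Inl v \<in> T2" "v \<in> internal_vertices VZ EZ" using Z.internal_char by simp_all
      then show "SZ v homeomorphic sphere (0::real^3) 1"
        "inj_on (iZ v) (edges_at (sub_edges (tree_top VZ EZ closure_of T2)) v)"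
        "iZ v ` edges_at (sub_edges (tree_top VZ EZ closure_of T2)) v \<subseteq> SZ v"
        using TZ Z.edges_at_in[OF v(1)] unfolding tree_of_spheres_def tree_of_spheres_data_def by simp_all
    qed
  next
    show "tos_cover (sub_vertices (tree_top VY EY closure_of T1))
            (sub_edges (tree_top VY EY closure_of T1)) SY iY
          (sub_vertices (tree_top VZ EZ closure_of T2))
            (sub_edges (tree_top VZ EZ closure_of T2)) SZ iZ F f"
      unfolding tos_cover_def
    proof (intro conjI allI impI ballI)
      show "F ` sub_vertices (tree_top VY EY closure_of T1) \<subseteq> sub_vertices (tree_top VZ EZ closure_of T2)"
        using FV by auto
    next
      fix v w assume "{v, w} \<in> sub_edges (tree_top VY EY closure_of T1)"
      then have "Inr {v, w} \<in> T1" using Y.EA unfolding sub_edges_def by simp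
      then have "Inr (F ` {v, w}) \<in> T2" using T1map[of "Inr {v, w}"] unfolding tree_map_def by simp
      then show "{F v, F w} \<in> sub_edges (tree_top VZ EZ closure_of T2)" using Z.EA unfolding sub_edges_def by simp
    next
      show "F ` leaves (sub_vertices (tree_top VY EY closure_of T1)) (sub_edges (tree_top VY EY closure_of T1))
            \<subseteq> leaves (sub_vertices (tree_top VZ EZ closure_of T2)) (sub_edges (tree_top VZ EZ closure_of T2))"
      proof
        fix x assume "x \<in> F ` leaves (sub_vertices (tree_top VY EY closure_of T1)) (sub_edges (tree_top VY EY closure_of T1))"
        then obtain v where x: "x = F v" and
          v: "v \<in> leaves (sub_vertices (tree_top VY EY closure_of T1)) (sub_edges (tree_top VY EY closure_of T1))" by auto
        from v have "(v \<in> sub_vertices (tree_top VY EY closure_of T1) \<and> Inl v \<notin> T1) \<or> (Inl v \<in> T1 \<and> v \<in> leaves VY EY)"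
          using Y.leaves_char by simp
        then show "x \<in> leaves (sub_vertices (tree_top VZ EZ closure_of T2)) (sub_edges (tree_top VZ EZ closure_of T2))"
        proof
          assume h: "v \<in> sub_vertices (tree_top VY EY closure_of T1) \<and> Inl v \<notin> T1"
          then have "F v \<in> sub_vertices (tree_top VZ EZ closure_of T2)" "Inl (F v) \<notin> T2"
            using FV bd by auto
          then show ?thesis unfolding x using Z.leaves_char by simp
        next
          assume h: "Inl v \<in> T1 \<and> v \<in> leaves VY EY"
          then have "Inl (F v) \<in> T2" using T1map[of "Inl v"] unfolding tree_map_def by simp
          moreover have "F v \<in> leaves VZ EZ" using h cov_L by auto
          ultimately show ?thesis unfolding x using Z.leaves_char by simp
        qed
      qed
    next
      show "F ` internal_vertices (sub_vertices (tree_top VY EY closure_of T1)) (sub_edges (tree_top VY EY closure_of T1))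
            \<subseteq> internal_vertices (sub_vertices (tree_top VZ EZ closure_of T2)) (sub_edges (tree_top VZ EZ closure_of T2))"
      proof
        fix x assume "x \<in> F ` internal_vertices (sub_vertices (tree_top VY EY closure_of T1)) (sub_edges (tree_top VY EY closure_of T1))"
        then obtain v where x: "x = F v" and
          v: "v \<in> internal_vertices (sub_vertices (tree_top VY EY closure_of T1)) (sub_edges (tree_top VY EY closure_of T1))" by auto
        then have h: "Inl v \<in> T1" "v \<in> internal_vertices VY EY" using Y.internal_char by simp_all
        then have "Inl (F v) \<in> T2" using T1map[of "Inl v"] unfolding tree_map_def by simp
        moreover have "F v \<in> internal_vertices VZ EZ" using h cov_I by auto
        ultimately show "x \<in> internal_vertices (sub_vertices (tree_top VZ EZ closure_of T2)) (sub_edges (tree_top VZ EZ closure_of T2))"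
          unfolding x using Z.internal_char by simp
      qed
    next
      fix v assume "v \<in> internal_vertices (sub_vertices (tree_top VY EY closure_of T1)) (sub_edges (tree_top VY EY closure_of T1))"
      then have h: "Inl v \<in> T1" "v \<in> internal_vertices VY EY" using Y.internal_char by simp_all
      then have FT: "Inl (F v) \<in> T2" using T1map[of "Inl v"] unfolding tree_map_def by simp
      have mY: "marked_points (sub_edges (tree_top VY EY closure_of T1)) iY v = marked_points EY iY v"
        unfolding marked_points_def using Y.edges_at_in[OF h(1)] by simp
      have mZ: "marked_points (sub_edges (tree_top VZ EZ closure_of T2)) iZ (F v) = marked_points EZ iZ (F v)"
        unfolding marked_points_def using Z.edges_at_in[OF FT] by simp
      have c: "branched_covering (f v) (SY v) (SZ (F v)) \<and>
        covering_space (SY v - marked_points EY iY v) (f v) (SZ (F v) - marked_points EZ iZ (F v)) \<and>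
        (\<forall>e\<in>edges_at EY v. f v (iY v e) = iZ (F v) (F ` e))" using cov_f[OF h(2)] .
      show "branched_covering (f v) (SY v) (SZ (F v))" using c by simp
      show "covering_space (SY v - marked_points (sub_edges (tree_top VY EY closure_of T1)) iY v) (f v)
         (SZ (F v) - marked_points (sub_edges (tree_top VZ EZ closure_of T2)) iZ (F v))"
        using c mY mZ by simp
      show "f v (iY v e) = iZ (F v) (F ` e)" if "e \<in> edges_at (sub_edges (tree_top VY EY closure_of T1)) v" for e
        using c Y.edges_at_in[OF h(1)] that by simp
    next
      fix v1 v2
      assume e: "{v1, v2} \<in> sub_edges (tree_top VY EY closure_of T1)"
        and i1: "v1 \<in> internal_vertices (sub_vertices (tree_top VY EY closure_of T1)) (sub_edges (tree_top VY EY closure_of T1))"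
        and i2: "v2 \<in> internal_vertices (sub_vertices (tree_top VY EY closure_of T1)) (sub_edges (tree_top VY EY closure_of T1))"
      have "Inr {v1, v2} \<in> T1" using e Y.EA unfolding sub_edges_def by simp
      then have "{v1, v2} \<in> EY" using Y.edges_in by simp
      moreover have "v1 \<in> internal_vertices VY EY" "v2 \<in> internal_vertices VY EY"
        using i1 i2 Y.internal_char by simp_all
      ultimately show "local_deg (f v1) (SY v1) (SZ (F v1)) (iY v1 {v1, v2}) =
        local_deg (f v2) (SY v2) (SZ (F v2)) (iY v2 {v1, v2})" by (rule cov_d)
    qed
  qed
qed

end
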